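(* Assume that $L_h$ is hyperregular, i.e. its Legendre transform $T\Lambda^k_h\to T^*\Lambda^k_h$, $(\varphi^i,\dot\varphi^i)\mapsto(\varphi^i,\pi_j)$ with $M_i^{\ j}\pi_j=\partial L_h/\partial\dot\varphi^i$, is a diffeomorphism. Then the dynamics of the Hamiltonian system $(\omega_h,H_h)$, namely $$M^j_{\ k}\dot\varphi^k=\frac{\partial H_h}{\partial\pi_j},\qquad M_j^{\ k}\dot\pi_k=-\frac{\partial H_h}{\partial\varphi^j},$$ are equivalent to the semi-discrete Euler--Lagrange equations $$\frac{d}{dt}(\partial_3\mathcal{L},v)_{L^2\Lambda^k(\Sigma)}-(\partial_2\mathcal{L},v)_{L^2\Lambda^k(\Sigma)}-(\partial_4\mathcal{L},dv)_{L^2\Lambda^{k+1}(\Sigma)}=0\quad\text{for all }v\in\Lambda^k_h,$$ with $\mathcal{L}$ evaluated at $(x^\mu,\varphi,\dot\varphi,d\varphi)$, $\varphi=\varphi^iv_i$.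
   Context: $\Sigma$ is a reference Cauchy surface of a spacetime $X\cong\mathbb{R}\times\Sigma$, $I$ an interval, $d$ the exterior derivative on $\Sigma$. $\Lambda^k_h\subset H\Lambda^k(\Sigma)$ is a finite element space with basis $\{v_i\}$, part of a subcomplex with cochain projections. The instantaneous Lagrangian density $\mathcal{L}(x^\mu,\varphi,\dot\varphi,d\varphi)$ is an $n$-form on $\Sigma$, with $\partial_2,\partial_3,\partial_4$ the $L^2$ Riesz representatives of its variations in $\varphi,\dot\varphi,d\varphi$. The semi-discrete Lagrangian is $L_h(t,\varphi^i,\dot\varphi^i)=\int_\Sigma\mathcal{L}(x^\mu,\varphi^iv_i,\dot\varphi^iv_i,\varphi^idv_i)$. $M$ is the mass matrix $M_i^{\ j}=(v_i,v_j)_{L^2}$, with $M_j^{\ k}$ denoting row $j$, column $k$ of $M$ and $M^j_{\ k}$ that of $M^T$. On $T^*\Lambda^k_h$ with coordinates $\varphi=\varphi^iv_i$, $\pi=\pi_iv^i$ ($v^i=(\cdot,v_i)_{L^2}$), $\omega_h=d\varphi^i\wedge M_i^{\ j}d\pi_j$. The semi-discrete Hamiltonian is $H_h(t,\varphi^i,\pi_i)=M_i^{\ j}\pi_j\dot\varphi^i-L_h(t,\varphi^i,\dot\varphi^i)$, with $\dot\varphi$ expressed via the inverse Legendre transform. *)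

theory Defs
  imports "HOL-Analysis.Analysis"
begin

definition emb :: "('n::finite \<Rightarrow> 'v::real_vector) \<Rightarrow> real^'n \<Rightarrow> 'v" where
  "emb v c = (\<Sum>i\<in>UNIV. c $ i *\<^sub>R v i)"

definition massM :: "('n::finite \<Rightarrow> 'v::real_inner) \<Rightarrow> real^'n^'n" where
  "massM v = (\<chi> i j. inner (v i) (v j))"

text \<open>Semi-discrete Lagrangian L_h(t, phi^i, phidot^i) = int L(x, phi^i v_i, phidot^i v_i, phi^i d v_i).
  Lag t a b c stands for the integrated density int_Sigma L(x^mu, a, b, c).\<close>
definition Lh :: "(real \<Rightarrow> 'v::real_vector \<Rightarrow> 'v \<Rightarrow> 'w::real_vector \<Rightarrow> real) \<Rightarrow> ('v \<Rightarrow> 'w)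
    \<Rightarrow> ('n::finite \<Rightarrow> 'v) \<Rightarrow> real \<Rightarrow> real^'n \<Rightarrow> real^'n \<Rightarrow> real" where
  "Lh Lag d v t q qd = Lag t (emb v q) (emb v qd) (emb (d \<circ> v) q)"

definition pderiv_coord :: "(real^'n::finite \<Rightarrow> real) \<Rightarrow> real^'n \<Rightarrow> 'n \<Rightarrow> real" where
  "pderiv_coord f x i = deriv (\<lambda>s. f (x + s *\<^sub>R axis i 1)) 0"

definition grad_coord :: "(real^'n::finite \<Rightarrow> real) \<Rightarrow> real^'n \<Rightarrow> real^'n" where
  "grad_coord f x = (\<chi> i. pderiv_coord f x i)"

definition legendre :: "(real \<Rightarrow> 'v::real_inner \<Rightarrow> 'v \<Rightarrow> 'w::real_vector \<Rightarrow> real) \<Rightarrow> ('v \<Rightarrow> 'w)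
    \<Rightarrow> ('n::finite \<Rightarrow> 'v) \<Rightarrow> real \<Rightarrow> (real^'n) \<times> (real^'n) \<Rightarrow> (real^'n) \<times> (real^'n)" where
  "legendre Lag d v t = (\<lambda>(q, qd). (q, matrix_inv (massM v) *v grad_coord (Lh Lag d v t q) qd))"

definition diffeo :: "('a::real_normed_vector \<Rightarrow> 'b::real_normed_vector) \<Rightarrow> bool" where
  "diffeo f \<longleftrightarrow> bij f \<and> (\<forall>x. f differentiable (at x)) \<and> (\<forall>y. inv f differentiable (at y))"

definition hyperregular :: "(real \<Rightarrow> 'v::real_inner \<Rightarrow> 'v \<Rightarrow> 'w::real_vector \<Rightarrow> real) \<Rightarrow> ('v \<Rightarrow> 'w)
    \<Rightarrow> ('n::finite \<Rightarrow> 'v) \<Rightarrow> bool" where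
  "hyperregular Lag d v \<longleftrightarrow> (\<forall>t. diffeo (legendre Lag d v t))"

definition Hh :: "(real \<Rightarrow> 'v::real_inner \<Rightarrow> 'v \<Rightarrow> 'w::real_vector \<Rightarrow> real) \<Rightarrow> ('v \<Rightarrow> 'w)
    \<Rightarrow> ('n::finite \<Rightarrow> 'v) \<Rightarrow> real \<Rightarrow> real^'n \<Rightarrow> real^'n \<Rightarrow> real" where
  "Hh Lag d v t q p =
     (let qd = snd (inv (legendre Lag d v t) (q, p)) in (massM v *v p) \<bullet> qd - Lh Lag d v t q qd)"

end

theory Submission
  imports Defs
begin


lemma emb_linear: "linear (emb (v::'n::finite \<Rightarrow> 'v::real_vector))"
  unfolding emb_def by (intro linearI) (auto simp: scaleR_add_left sum.distrib scaleR_sum_right)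

lemma emb_axis: "emb v (axis i 1) = v i"
proof -
  have "emb v (axis i 1) = (\<Sum>j\<in>UNIV. if j = i then v j else 0)"
    unfolding emb_def axis_def by (intro sum.cong) auto
  then show ?thesis by simp
qed

lemma emb_d: assumes "linear d" shows "d (emb v c) = emb (d \<circ> v) c"
  unfolding emb_def using assms by (simp add: linear_sum linear_scale)

lemma mass_quad: "x \<bullet> (massM v *v x) = inner (emb v x) (emb v x)"
proof -
  have "x \<bullet> (massM v *v x) = (\<Sum>i\<in>UNIV. \<Sum>j\<in>UNIV. x $ i * (inner (v i) (v j) * x $ j))"
    unfolding massM_def by (simp add: inner_vec_def matrix_vector_mult_def sum_distrib_left)
  also have "\<dots> = inner (emb v x) (emb v x)"
    unfolding emb_def by (simp add: inner_sum_left inner_sum_right sum_distrib_left algebra_simps)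
      (subst (2) sum.swap, simp add: mult.left_commute)
  finally show ?thesis .
qed

lemma mass_sym: "transpose (massM v) = massM v"
  unfolding massM_def transpose_def by (simp add: inner_commute)

lemma span_emb: assumes "w \<in> span (range (v::'n::finite \<Rightarrow> 'v::real_vector))" "inj v"
  shows "\<exists>c. w = emb v c"
proof -
  from assms(1) obtain u where u: "w = (\<Sum>x\<in>range v. u x *\<^sub>R x)"
    using span_finite[of "range v"] by auto
  have "(\<Sum>x\<in>range v. u x *\<^sub>R x) = (\<Sum>i\<in>UNIV. u (v i) *\<^sub>R v i)"
    using assms(2) by (simp add: sum.reindex)
  then show ?thesis unfolding emb_def using u by (intro exI[of _ "\<chi> i. u (v i)"]) simp
qed

lemma emb_zero: assumes "independent (range v)" "inj v" "emb v c = 0" shows "c = 0"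
proof -
  let ?u = "\<lambda>x. c $ (inv v x)"
  have r: "(\<Sum>x\<in>range v. ?u x *\<^sub>R x) = (\<Sum>i\<in>UNIV. (\<lambda>x. ?u x *\<^sub>R x) (v i))"
    using sum.reindex[of v UNIV "\<lambda>x. ?u x *\<^sub>R x"] assms(2) by simp
  have "(\<Sum>i\<in>UNIV. (\<lambda>x. ?u x *\<^sub>R x) (v i)) = emb v c"
    unfolding emb_def using assms(2) by (intro sum.cong) auto
  then have z: "(\<Sum>x\<in>range v. ?u x *\<^sub>R x) = 0" using r assms(3) by simp
  have "\<forall>x\<in>range v. ?u x = 0"
  proof -
    have "\<forall>S\<subseteq>range v. finite S \<longrightarrow> (\<forall>u. (\<Sum>x\<in>S. u x *\<^sub>R x) = 0 \<longrightarrow> (\<forall>x\<in>S. u x = 0))"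
      using assms(1) by (simp add: independent_explicit_finite_subsets)
    note H = this
    have B: "finite (range v)" by simp
    show ?thesis using H[rule_format, OF subset_refl B z] by blast
  qed
  then have "\<forall>i. c $ i = 0" using assms(2) by auto
  then show ?thesis by (simp add: vec_eq_iff)
qed

lemma mass_invertible: assumes "independent (range v)" "inj v" shows "invertible (massM v)"
proof -
  have "\<forall>x. massM v *v x = 0 \<longrightarrow> x = 0"
  proof (intro allI impI)
    fix x assume "massM v *v x = 0"
    then have "inner (emb v x) (emb v x) = 0" using mass_quad[of x v] by simp
    then show "x = 0" using emb_zero[OF assms] by simp
  qed
  then show ?thesis unfolding invertible_left_inverse matrix_left_invertible_ker .
qed

lemma minv: assumes "invertible A" shows "A ** matrix_inv A = mat 1" "matrix_inv A ** A = mat 1"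
  using assms unfolding invertible_def matrix_inv_def by (metis (mono_tags, lifting) someI_ex)+

lemma minv_v: assumes "invertible (A::real^'n^'n)" shows "A *v (matrix_inv A *v x) = x" "matrix_inv A *v (A *v x) = x"
  using minv[OF assms] by (simp_all add: matrix_vector_mul_assoc)

lemma Lh_curve:
  fixes Lag :: "real \<Rightarrow> 'v::real_inner \<Rightarrow> 'v \<Rightarrow> 'w::real_inner \<Rightarrow> real"
    and v :: "'n::finite \<Rightarrow> 'v"
  assumes riesz: "\<And>t a b c. ((\<lambda>(x, y, z). Lag t x y z) has_derivative
                  (\<lambda>(x, y, z). D2 t a b c \<bullet> x + D3 t a b c \<bullet> y + D4 t a b c \<bullet> z)) (at (a, b, c))"
    and lin: "linear d"
    and da: "(a has_vector_derivative a') (at s0)"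
    and db: "(b has_vector_derivative b') (at s0)"
  shows "((\<lambda>s. Lh Lag d v t (a s) (b s)) has_real_derivative
     (D2 t (emb v (a s0)) (emb v (b s0)) (emb (d \<circ> v) (a s0)) \<bullet> emb v a'
    + D3 t (emb v (a s0)) (emb v (b s0)) (emb (d \<circ> v) (a s0)) \<bullet> emb v b'
    + D4 t (emb v (a s0)) (emb v (b s0)) (emb (d \<circ> v) (a s0)) \<bullet> emb (d \<circ> v) a')) (at s0)"
proof -
  have bl1: "bounded_linear (emb v)" using emb_linear linear_conv_bounded_linear by blast
  have bl2: "bounded_linear (emb (d \<circ> v))" using emb_linear linear_conv_bounded_linear by blast
  have ha: "(a has_derivative (\<lambda>h. h *\<^sub>R a')) (at s0)" using da by (simp add: has_vector_derivative_def)
  have hb: "(b has_derivative (\<lambda>h. h *\<^sub>R b')) (at s0)" using db by (simp add: has_vector_derivative_def)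
  have e1: "((\<lambda>s. emb v (a s)) has_derivative (\<lambda>h. emb v (h *\<^sub>R a'))) (at s0)"
    by (rule bounded_linear.has_derivative[OF bl1 ha])
  have e2: "((\<lambda>s. emb v (b s)) has_derivative (\<lambda>h. emb v (h *\<^sub>R b'))) (at s0)"
    by (rule bounded_linear.has_derivative[OF bl1 hb])
  have e3: "((\<lambda>s. emb (d \<circ> v) (a s)) has_derivative (\<lambda>h. emb (d \<circ> v) (h *\<^sub>R a'))) (at s0)"
    by (rule bounded_linear.has_derivative[OF bl2 ha])
  have P: "((\<lambda>s. (emb v (a s), emb v (b s), emb (d \<circ> v) (a s))) has_derivative
      (\<lambda>h. (emb v (h *\<^sub>R a'), emb v (h *\<^sub>R b'), emb (d \<circ> v) (h *\<^sub>R a')))) (at s0)"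
    by (intro has_derivative_Pair e1 e2 e3)
  note C = has_derivative_compose[OF P riesz[of t]]
  have eq: "(\<lambda>s. (\<lambda>(x, y, z). Lag t x y z) (emb v (a s), emb v (b s), emb (d \<circ> v) (a s)))
      = (\<lambda>s. Lh Lag d v t (a s) (b s))" by (simp add: Lh_def)
  have l1: "emb v (h *\<^sub>R x) = h *\<^sub>R emb v x" for h x using emb_linear[of v] by (simp add: linear_scale)
  have l2: "emb (d \<circ> v) (h *\<^sub>R x) = h *\<^sub>R emb (d \<circ> v) x" for h x using emb_linear[of "d \<circ> v"] by (simp add: linear_scale)
  show ?thesis
    unfolding has_field_derivative_def
    by (rule has_derivative_eq_rhs[OF C[unfolded eq]]) (simp add: fun_eq_iff l1 l2 algebra_simps)
qed


definition GG :: "(real \<Rightarrow> 'v::real_inner \<Rightarrow> 'v \<Rightarrow> 'w \<Rightarrow> 'v) \<Rightarrow> ('v \<Rightarrow> 'w::real_vector) \<Rightarrow> ('n::finite \<Rightarrow> 'v)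
   \<Rightarrow> real \<Rightarrow> real^'n \<Rightarrow> real^'n \<Rightarrow> real^'n" where
  "GG D3 d v t q qd = (\<chi> i. D3 t (emb v q) (emb v qd) (emb (d \<circ> v) q) \<bullet> v i)"

lemma GG_inner: "GG D3 d v t q qd \<bullet> k = D3 t (emb v q) (emb v qd) (emb (d \<circ> v) q) \<bullet> emb v k"
  unfolding GG_def emb_def by (simp add: inner_vec_def inner_sum_right mult.commute)

lemma emb0: "emb v 0 = 0" unfolding emb_def by simp

lemma legendre_eq:
  fixes Lag :: "real \<Rightarrow> 'v::real_inner \<Rightarrow> 'v \<Rightarrow> 'w::real_inner \<Rightarrow> real"
    and v :: "'n::finite \<Rightarrow> 'v"
  assumes riesz: "\<And>t a b c. ((\<lambda>(x, y, z). Lag t x y z) has_derivative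
                  (\<lambda>(x, y, z). D2 t a b c \<bullet> x + D3 t a b c \<bullet> y + D4 t a b c \<bullet> z)) (at (a, b, c))"
    and lin: "linear d"
  shows "legendre Lag d v t (q, qd) = (q, matrix_inv (massM v) *v GG D3 d v t q qd)"
proof -
  have "grad_coord (Lh Lag d v t q) qd = GG D3 d v t q qd"
  proof -
    have "pderiv_coord (Lh Lag d v t q) qd i = D3 t (emb v q) (emb v qd) (emb (d \<circ> v) q) \<bullet> v i" for i
    proof -
      have a: "((\<lambda>s. q) has_vector_derivative 0) (at 0)" by (rule has_vector_derivative_const)
      have b: "((\<lambda>s. qd + s *\<^sub>R axis i 1) has_vector_derivative axis i 1) (at 0)"
        by (auto intro!: derivative_eq_intros)
      note L = Lh_curve[OF riesz lin a b, where t=t]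
      show ?thesis unfolding pderiv_coord_def
        by (rule DERIV_imp_deriv) (use L in \<open>simp add: emb0 emb_axis\<close>)
    qed
    then show ?thesis unfolding grad_coord_def GG_def by (intro arg_cong[where f=vec_lambda] ext)
  qed
  then show ?thesis unfolding legendre_def by simp
qed

lemma axis_transpose: "((A::real^'n::finite^'n) *v axis j 1) \<bullet> x = (transpose A *v x) $ j"
  unfolding inner_vec_def matrix_vector_mult_def transpose_def axis_def
  by (simp add: if_distrib sum_distrib_left mult.commute cong: if_cong)



lemma legendre_fst: "fst (legendre Lag d v t x) = fst x"
  unfolding legendre_def by (cases x) simp

lemma H_curve:
  fixes Lag :: "real \<Rightarrow> 'v::real_inner \<Rightarrow> 'v \<Rightarrow> 'w::real_inner \<Rightarrow> real"
    and v :: "'n::finite \<Rightarrow> 'v" and t :: real and q p ea eb :: "real^'n"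
  assumes riesz: "\<And>t a b c. ((\<lambda>(x, y, z). Lag t x y z) has_derivative
                  (\<lambda>(x, y, z). D2 t a b c \<bullet> x + D3 t a b c \<bullet> y + D4 t a b c \<bullet> z)) (at (a, b, c))"
    and lin: "linear d"
    and basis: "independent (range v)" "inj v"
    and hyp: "hyperregular Lag d v"
  defines "Q0 \<equiv> snd (inv (legendre Lag d v t) (q, p))"
  shows "((\<lambda>s. Hh Lag d v t (q + s *\<^sub>R ea) (p + s *\<^sub>R eb)) has_real_derivative
     ((massM v *v eb) \<bullet> Q0 - D2 t (emb v q) (emb v Q0) (emb (d \<circ> v) q) \<bullet> emb v ea
        - D4 t (emb v q) (emb v Q0) (emb (d \<circ> v) q) \<bullet> emb (d \<circ> v) ea)) (at 0)"
proof -
  define F where "F = legendre Lag d v t"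
  define M where "M = massM v"
  have invM: "invertible M" unfolding M_def by (rule mass_invertible[OF basis])
  have dF: "diffeo F" using hyp unfolding hyperregular_def F_def by blast
  then have bF: "bij F" and dinv: "\<And>y. inv F differentiable (at y)" unfolding diffeo_def by auto
  have FinvF: "F (inv F y) = y" for y using bF by (meson bij_inv_eq_iff)
  have fstinv: "fst (inv F y) = fst y" for y
    using legendre_fst[of Lag d v t "inv F y"] FinvF[of y] unfolding F_def by simp
  define Y where "Y = (\<lambda>s::real. (q + s *\<^sub>R ea, p + s *\<^sub>R eb))"
  define Qd where "Qd = (\<lambda>s. snd (inv F (Y s)))"
  have Y0: "Y 0 = (q, p)" unfolding Y_def by simp
  have Q00: "Qd 0 = Q0" unfolding Qd_def Q0_def Y0 F_def ..
  have XY: "inv F (Y s) = (q + s *\<^sub>R ea, Qd s)" for s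
    using fstinv[of "Y s"] unfolding Qd_def Y_def by (simp add: prod_eq_iff)
  obtain g' where g': "(inv F has_derivative g') (at (Y 0))"
    using dinv[of "Y 0"] unfolding differentiable_def by blast
  have dY: "(Y has_derivative (\<lambda>h. h *\<^sub>R (ea, eb))) (at 0)"
    unfolding Y_def using has_vector_derivative_Pair[of "\<lambda>s. q + s *\<^sub>R ea" ea 0 UNIV "\<lambda>s. p + s *\<^sub>R eb" eb]
    by (auto simp: has_vector_derivative_def intro!: derivative_eq_intros)
  have dX: "((\<lambda>s. inv F (Y s)) has_derivative (\<lambda>h. g' (h *\<^sub>R (ea, eb)))) (at 0)"
    by (rule has_derivative_compose[OF dY g'])
  have lg: "linear g'" using g' has_derivative_linear by blast
  define Qd' where "Qd' = snd (g' (ea, eb))"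
  have dQ: "(Qd has_vector_derivative Qd') (at 0)"
  proof -
    have "(Qd has_derivative (\<lambda>h. snd (g' (h *\<^sub>R (ea, eb))))) (at 0)"
      unfolding Qd_def by (rule has_derivative_snd[OF dX])
    moreover have "(\<lambda>h. snd (g' (h *\<^sub>R (ea, eb)))) = (\<lambda>h. h *\<^sub>R Qd')"
    proof
      fix h :: real
      have "g' (h *\<^sub>R (ea, eb)) = h *\<^sub>R g' (ea, eb)" using lg by (rule linear_scale)
      then show "snd (g' (h *\<^sub>R (ea, eb))) = h *\<^sub>R Qd'" unfolding Qd'_def by simp
    qed
    ultimately show ?thesis by (simp add: has_vector_derivative_def)
  qed
  have da: "((\<lambda>s. q + s *\<^sub>R ea) has_vector_derivative ea) (at 0)"
    by (auto intro!: derivative_eq_intros)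
  note L = Lh_curve[where Lag=Lag and t=t and v=v, OF riesz lin da dQ]
  have Hform: "Hh Lag d v t (q + s *\<^sub>R ea) (p + s *\<^sub>R eb)
      = (M *v (p + s *\<^sub>R eb)) \<bullet> Qd s - Lh Lag d v t (q + s *\<^sub>R ea) (Qd s)" for s
    unfolding Hh_def Let_def Qd_def Y_def M_def F_def by simp
  have dMp: "((\<lambda>s. M *v (p + s *\<^sub>R eb)) has_derivative (\<lambda>h. h *\<^sub>R (M *v eb))) (at 0)"
  proof -
    have "(\<lambda>s. M *v (p + s *\<^sub>R eb)) = (\<lambda>s. M *v p + s *\<^sub>R (M *v eb))"
      by (simp add: matrix_vector_right_distrib matrix_vector_mult_scaleR)
    then show ?thesis by (auto intro!: derivative_eq_intros)
  qed
  have dQ': "(Qd has_derivative (\<lambda>h. h *\<^sub>R Qd')) (at 0)" using dQ by (simp add: has_vector_derivative_def)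
  have dI: "((\<lambda>s. (M *v (p + s *\<^sub>R eb)) \<bullet> Qd s) has_real_derivative ((M *v p) \<bullet> Qd' + (M *v eb) \<bullet> Q0)) (at 0)"
    unfolding has_field_derivative_def
    by (rule has_derivative_eq_rhs[OF has_derivative_inner[OF dMp dQ']]) (auto simp: fun_eq_iff Q00 algebra_simps)
  have GGeq: "GG D3 d v t q Q0 = M *v p"
  proof -
    have "F (q, Q0) = (q, p)"
      using FinvF[of "(q,p)"] XY[of 0] Q00 unfolding Y0 by simp
    then have "matrix_inv M *v GG D3 d v t q Q0 = p"
      using legendre_eq[OF riesz lin, where v=v and t=t and q=q and qd=Q0] unfolding F_def M_def by simp
    then show ?thesis using minv_v(1)[OF invM] by metis
  qed
  have key: "D3 t (emb v q) (emb v Q0) (emb (d \<circ> v) q) \<bullet> emb v Qd' = (M *v p) \<bullet> Qd'"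
    using GG_inner[of D3 d v t q Q0 Qd'] GGeq by simp
  show ?thesis
    unfolding Hform
    using DERIV_diff[OF dI L] by (simp add: Q00 key algebra_simps M_def)
qed


lemma grad_p_H:
  fixes Lag :: "real \<Rightarrow> 'v::real_inner \<Rightarrow> 'v \<Rightarrow> 'w::real_inner \<Rightarrow> real"
    and v :: "'n::finite \<Rightarrow> 'v" and t :: real and q p :: "real^'n"
  assumes riesz: "\<And>t a b c. ((\<lambda>(x, y, z). Lag t x y z) has_derivative
                  (\<lambda>(x, y, z). D2 t a b c \<bullet> x + D3 t a b c \<bullet> y + D4 t a b c \<bullet> z)) (at (a, b, c))"
    and lin: "linear d"
    and basis: "independent (range v)" "inj v"
    and hyp: "hyperregular Lag d v"
  shows "grad_coord (\<lambda>\<pi>. Hh Lag d v t q \<pi>) p = transpose (massM v) *v snd (inv (legendre Lag d v t) (q, p))"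
proof -
  have "pderiv_coord (\<lambda>\<pi>. Hh Lag d v t q \<pi>) p j = (transpose (massM v) *v snd (inv (legendre Lag d v t) (q, p))) $ j" for j
  proof -
    note HC = H_curve[where Lag=Lag and t=t and q=q and p=p and ea=0 and eb="axis j 1", OF riesz lin basis hyp]
    have "((\<lambda>s. Hh Lag d v t q (p + s *\<^sub>R axis j 1)) has_real_derivative
        (transpose (massM v) *v snd (inv (legendre Lag d v t) (q, p))) $ j) (at 0)"
      using HC by (simp add: emb0 axis_transpose)
    then show ?thesis unfolding pderiv_coord_def by (rule DERIV_imp_deriv)
  qed
  then show ?thesis unfolding grad_coord_def by (simp add: vec_eq_iff)
qed

lemma grad_q_H:
  fixes Lag :: "real \<Rightarrow> 'v::real_inner \<Rightarrow> 'v \<Rightarrow> 'w::real_inner \<Rightarrow> real"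
    and v :: "'n::finite \<Rightarrow> 'v" and t :: real and q p :: "real^'n"
  assumes riesz: "\<And>t a b c. ((\<lambda>(x, y, z). Lag t x y z) has_derivative
                  (\<lambda>(x, y, z). D2 t a b c \<bullet> x + D3 t a b c \<bullet> y + D4 t a b c \<bullet> z)) (at (a, b, c))"
    and lin: "linear d"
    and basis: "independent (range v)" "inj v"
    and hyp: "hyperregular Lag d v"
  shows "grad_coord (\<lambda>\<phi>. Hh Lag d v t \<phi> p) q = (\<chi> j.
     - (D2 t (emb v q) (emb v (snd (inv (legendre Lag d v t) (q, p)))) (emb (d \<circ> v) q) \<bullet> v j
      + D4 t (emb v q) (emb v (snd (inv (legendre Lag d v t) (q, p)))) (emb (d \<circ> v) q) \<bullet> d (v j)))"
proof -
  have "pderiv_coord (\<lambda>\<phi>. Hh Lag d v t \<phi> p) q j = 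
     - (D2 t (emb v q) (emb v (snd (inv (legendre Lag d v t) (q, p)))) (emb (d \<circ> v) q) \<bullet> v j
      + D4 t (emb v q) (emb v (snd (inv (legendre Lag d v t) (q, p)))) (emb (d \<circ> v) q) \<bullet> d (v j))" for j
  proof -
    note HC = H_curve[where Lag=Lag and t=t and q=q and p=p and ea="axis j 1" and eb=0, OF riesz lin basis hyp]
    have "((\<lambda>s. Hh Lag d v t (q + s *\<^sub>R axis j 1) p) has_real_derivative
       - (D2 t (emb v q) (emb v (snd (inv (legendre Lag d v t) (q, p)))) (emb (d \<circ> v) q) \<bullet> v j
      + D4 t (emb v q) (emb v (snd (inv (legendre Lag d v t) (q, p)))) (emb (d \<circ> v) q) \<bullet> d (v j))) (at 0)"
      using HC by (simp add: emb_axis)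
    then show ?thesis unfolding pderiv_coord_def by (rule DERIV_imp_deriv)
  qed
  then show ?thesis unfolding grad_coord_def by (simp add: vec_eq_iff)
qed

lemma chi_inner:
  assumes "linear d"
  shows "(\<chi> j. X \<bullet> v j + Y \<bullet> d (v j)) \<bullet> c = X \<bullet> emb v c + Y \<bullet> d (emb v c)"
  unfolding emb_d[OF assms] unfolding emb_def
  by (simp add: inner_vec_def inner_sum_right algebra_simps sum.distrib)

lemma vec_deriv_comp:
  assumes "\<And>j. ((\<lambda>s. f s $ j) has_real_derivative D j) (at t within S)"
  shows "(f has_vector_derivative (\<chi> j. D j)) (at t within S)"
  unfolding has_vector_derivative_def
proof (rule has_derivative_componentwise_within[THEN iffD2], intro ballI)
  fix i :: "real^'a" assume "i \<in> Basis"
  then obtain j where i: "i = axis j 1" unfolding Basis_vec_def by auto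
  have "((\<lambda>s. f s $ j) has_derivative (\<lambda>h. h * D j)) (at t within S)"
    using assms[of j] unfolding has_field_derivative_def by (rule has_derivative_eq_rhs) (simp add: fun_eq_iff mult.commute)
  then show "((\<lambda>x. f x \<bullet> i) has_derivative (\<lambda>x. x *\<^sub>R (\<chi> j. D j) \<bullet> i)) (at t within S)"
    unfolding i by (simp add: inner_axis)
qed



theorem mainTheorem7:
  fixes Lag :: "real \<Rightarrow> 'v::real_inner \<Rightarrow> 'v \<Rightarrow> 'w::real_inner \<Rightarrow> real"
    and D2 D3 :: "real \<Rightarrow> 'v \<Rightarrow> 'v \<Rightarrow> 'w \<Rightarrow> 'v"
    and D4 :: "real \<Rightarrow> 'v \<Rightarrow> 'v \<Rightarrow> 'w \<Rightarrow> 'w"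
    and d :: "'v \<Rightarrow> 'w"
    and v :: "'n::finite \<Rightarrow> 'v"
    and I :: "real set"
    and q q' p :: "real \<Rightarrow> real^'n"
  assumes d_lin: "linear d"
    and basis: "independent (range v)" "inj v"
    and riesz: "\<And>t a b c. ((\<lambda>(x, y, z). Lag t x y z) has_derivative
                  (\<lambda>(x, y, z). D2 t a b c \<bullet> x + D3 t a b c \<bullet> y + D4 t a b c \<bullet> z)) (at (a, b, c))"
    and hyp: "hyperregular Lag d v"
    and I_int: "is_interval I"
    and q_deriv: "\<And>t. t \<in> I \<Longrightarrow> (q has_vector_derivative q' t) (at t within I)"
  shows "(\<exists>p'. \<forall>t\<in>I. (p has_vector_derivative p' t) (at t within I)
            \<and> transpose (massM v) *v q' t = grad_coord (\<lambda>\<pi>. Hh Lag d v t (q t) \<pi>) (p t)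
            \<and> massM v *v p' t = - grad_coord (\<lambda>\<phi>. Hh Lag d v t \<phi> (p t)) (q t))
     \<longleftrightarrow>
     ((\<forall>t\<in>I. p t = snd (legendre Lag d v t (q t, q' t)))
      \<and> (\<forall>w\<in>span (range v). \<forall>t\<in>I. \<exists>D.
           ((\<lambda>s. D3 s (emb v (q s)) (emb v (q' s)) (d (emb v (q s))) \<bullet> w) has_real_derivative D)
              (at t within I)
           \<and> D - D2 t (emb v (q t)) (emb v (q' t)) (d (emb v (q t))) \<bullet> w
               - D4 t (emb v (q t)) (emb v (q' t)) (d (emb v (q t))) \<bullet> d w = 0))"
proof -
  define M where "M = massM v"
  have invM: "invertible M" unfolding M_def by (rule mass_invertible[OF basis])
  have symM: "transpose M = M" unfolding M_def by (rule mass_sym)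
  define F where "F = (\<lambda>t. legendre Lag d v t)"
  have bF: "bij (F t)" for t using hyp unfolding hyperregular_def diffeo_def F_def by blast
  have FinvF: "F t (inv (F t) y) = y" for t y using bF[of t] by (meson bij_inv_eq_iff)
  have invFF: "inv (F t) (F t x) = x" for t x using bF[of t] by (simp add: bij_is_inj)
  have fstinv: "fst (inv (F t) y) = fst y" for t y
    using legendre_fst[of Lag d v t "inv (F t) y"] FinvF[of t y] unfolding F_def by simp
  have dE: "d (emb v c) = emb (d \<circ> v) c" for c by (rule emb_d[OF d_lin])
  define G where "G = (\<lambda>s. GG D3 d v s (q s) (q' s))"
  have leg: "F s (q s, q' s) = (q s, matrix_inv M *v G s)" for s
    unfolding F_def G_def M_def by (rule legendre_eq[OF riesz d_lin])
  have Gc: "G s $ j = D3 s (emb v (q s)) (emb v (q' s)) (d (emb v (q s))) \<bullet> v j" for s j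
    unfolding G_def GG_def dE by simp
  have GI: "D3 s (emb v (q s)) (emb v (q' s)) (d (emb v (q s))) \<bullet> emb v c = G s \<bullet> c" for s c
    unfolding G_def GG_inner dE ..
  have gp: "grad_coord (\<lambda>\<pi>. Hh Lag d v t x \<pi>) y = transpose M *v snd (inv (F t) (x, y))" for t x y
    unfolding M_def F_def by (rule grad_p_H[OF riesz d_lin basis hyp])
  have gq: "grad_coord (\<lambda>\<phi>. Hh Lag d v t \<phi> y) x = (\<chi> j.
     - (D2 t (emb v x) (emb v (snd (inv (F t) (x, y)))) (d (emb v x)) \<bullet> v j
      + D4 t (emb v x) (emb v (snd (inv (F t) (x, y)))) (d (emb v x)) \<bullet> d (v j)))" for t x y
    unfolding F_def dE by (rule grad_q_H[OF riesz d_lin basis hyp])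
  show ?thesis
  proof
    assume "\<exists>p'. \<forall>t\<in>I. (p has_vector_derivative p' t) (at t within I)
            \<and> transpose (massM v) *v q' t = grad_coord (\<lambda>\<pi>. Hh Lag d v t (q t) \<pi>) (p t)
            \<and> massM v *v p' t = - grad_coord (\<lambda>\<phi>. Hh Lag d v t \<phi> (p t)) (q t)"
    then obtain p' where P: "\<And>t. t \<in> I \<Longrightarrow> (p has_vector_derivative p' t) (at t within I)
            \<and> transpose M *v q' t = grad_coord (\<lambda>\<pi>. Hh Lag d v t (q t) \<pi>) (p t)
            \<and> M *v p' t = - grad_coord (\<lambda>\<phi>. Hh Lag d v t \<phi> (p t)) (q t)"
      unfolding M_def by blast
    have qq: "inv (F t) (q t, p t) = (q t, q' t)" if t: "t \<in> I" for t
    proof -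
      have "transpose M *v q' t = transpose M *v snd (inv (F t) (q t, p t))"
        using P[OF t] gp by simp
      then have "q' t = snd (inv (F t) (q t, p t))" using minv_v(2)[OF invM] symM by metis
      then show ?thesis using fstinv[of t "(q t, p t)"] by (simp add: prod_eq_iff)
    qed
    have pt: "p t = snd (F t (q t, q' t))" if t: "t \<in> I" for t
      using FinvF[of t "(q t, p t)"] qq[OF t] by simp
    have MpG: "M *v p t = G t" if t: "t \<in> I" for t
      using pt[OF t] leg[of t] minv_v(1)[OF invM] by simp
    show "(\<forall>t\<in>I. p t = snd (legendre Lag d v t (q t, q' t)))
      \<and> (\<forall>w\<in>span (range v). \<forall>t\<in>I. \<exists>D.
           ((\<lambda>s. D3 s (emb v (q s)) (emb v (q' s)) (d (emb v (q s))) \<bullet> w) has_real_derivative D)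
              (at t within I)
           \<and> D - D2 t (emb v (q t)) (emb v (q' t)) (d (emb v (q t))) \<bullet> w
               - D4 t (emb v (q t)) (emb v (q' t)) (d (emb v (q t))) \<bullet> d w = 0)"
    proof (intro conjI ballI)
      fix t assume "t \<in> I" then show "p t = snd (legendre Lag d v t (q t, q' t))"
        using pt unfolding F_def by blast
    next
      fix w t assume w: "w \<in> span (range v)" and t: "t \<in> I"
      obtain c where c: "w = emb v c" using span_emb[OF w basis(2)] by blast
      have bl: "bounded_linear (\<lambda>x. (M *v x) \<bullet> c)"
        by (intro bounded_linear_compose[OF bounded_linear_inner_left] matrix_vector_mul_bounded_linear)
      have dp: "(p has_derivative (\<lambda>h. h *\<^sub>R p' t)) (at t within I)"
        using P[OF t] by (simp add: has_vector_derivative_def)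
      have d1: "((\<lambda>s. (M *v p s) \<bullet> c) has_derivative (\<lambda>h. (M *v (h *\<^sub>R p' t)) \<bullet> c)) (at t within I)"
        by (rule bounded_linear.has_derivative[OF bl dp])
      have d2: "((\<lambda>s. D3 s (emb v (q s)) (emb v (q' s)) (d (emb v (q s))) \<bullet> w) has_derivative (\<lambda>h. (M *v (h *\<^sub>R p' t)) \<bullet> c)) (at t within I)"
        by (rule has_derivative_transform[OF t _ d1]) (simp add: c GI MpG)
      have d3: "((\<lambda>s. D3 s (emb v (q s)) (emb v (q' s)) (d (emb v (q s))) \<bullet> w) has_real_derivative ((M *v p' t) \<bullet> c)) (at t within I)"
        unfolding has_field_derivative_def
        by (rule has_derivative_eq_rhs[OF d2]) (simp add: fun_eq_iff matrix_vector_mult_scaleR mult.commute)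
      have "M *v p' t = (\<chi> j. D2 t (emb v (q t)) (emb v (q' t)) (d (emb v (q t))) \<bullet> v j
                     + D4 t (emb v (q t)) (emb v (q' t)) (d (emb v (q t))) \<bullet> d (v j))"
        using P[OF t] gq qq[OF t] by (simp add: vec_eq_iff)
      then have "(M *v p' t) \<bullet> c = D2 t (emb v (q t)) (emb v (q' t)) (d (emb v (q t))) \<bullet> w
               + D4 t (emb v (q t)) (emb v (q' t)) (d (emb v (q t))) \<bullet> d w"
        using chi_inner[OF d_lin] c by simp
      then show "\<exists>D. ((\<lambda>s. D3 s (emb v (q s)) (emb v (q' s)) (d (emb v (q s))) \<bullet> w) has_real_derivative D)
              (at t within I)
           \<and> D - D2 t (emb v (q t)) (emb v (q' t)) (d (emb v (q t))) \<bullet> w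
               - D4 t (emb v (q t)) (emb v (q' t)) (d (emb v (q t))) \<bullet> d w = 0"
        using d3 by (intro exI[of _ "(M *v p' t) \<bullet> c"]) simp
    qed
  next
    assume R: "(\<forall>t\<in>I. p t = snd (legendre Lag d v t (q t, q' t)))
      \<and> (\<forall>w\<in>span (range v). \<forall>t\<in>I. \<exists>D.
           ((\<lambda>s. D3 s (emb v (q s)) (emb v (q' s)) (d (emb v (q s))) \<bullet> w) has_real_derivative D)
              (at t within I)
           \<and> D - D2 t (emb v (q t)) (emb v (q' t)) (d (emb v (q t))) \<bullet> w
               - D4 t (emb v (q t)) (emb v (q' t)) (d (emb v (q t))) \<bullet> d w = 0)"
    have pt: "p t = matrix_inv M *v G t" if t: "t \<in> I" for t
      using R t leg[of t] unfolding F_def by simp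
    have qq: "inv (F t) (q t, p t) = (q t, q' t)" if t: "t \<in> I" for t
      using invFF[of t "(q t, q' t)"] leg[of t] pt[OF t] by simp
    define E2 where "E2 = (\<lambda>t j. D2 t (emb v (q t)) (emb v (q' t)) (d (emb v (q t))) \<bullet> v j
                     + D4 t (emb v (q t)) (emb v (q' t)) (d (emb v (q t))) \<bullet> d (v j))"
    have EL: "\<forall>j. \<forall>t\<in>I. \<exists>D. ((\<lambda>s. G s $ j) has_real_derivative D) (at t within I) \<and> D = E2 t j"
    proof (intro allI ballI)
      fix j t assume t: "t \<in> I"
      have "v j \<in> span (range v)" by (simp add: span_base)
      then obtain D where "((\<lambda>s. D3 s (emb v (q s)) (emb v (q' s)) (d (emb v (q s))) \<bullet> v j) has_real_derivative D)
              (at t within I)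
           \<and> D - D2 t (emb v (q t)) (emb v (q' t)) (d (emb v (q t))) \<bullet> v j
               - D4 t (emb v (q t)) (emb v (q' t)) (d (emb v (q t))) \<bullet> d (v j) = 0"
        using R t by blast
      then show "\<exists>D. ((\<lambda>s. G s $ j) has_real_derivative D) (at t within I) \<and> D = E2 t j"
        unfolding Gc E2_def by (intro exI[of _ D]) simp
    qed
    then have "\<forall>j. \<exists>f. \<forall>t\<in>I. ((\<lambda>s. G s $ j) has_real_derivative f t) (at t within I) \<and> f t = E2 t j"
      by (auto intro!: bchoice)
    then obtain Df where Df: "\<And>j t. t \<in> I \<Longrightarrow> ((\<lambda>s. G s $ j) has_real_derivative Df j t) (at t within I) \<and> Df j t = E2 t j"
      by metis
    show "\<exists>p'. \<forall>t\<in>I. (p has_vector_derivative p' t) (at t within I)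
            \<and> transpose (massM v) *v q' t = grad_coord (\<lambda>\<pi>. Hh Lag d v t (q t) \<pi>) (p t)
            \<and> massM v *v p' t = - grad_coord (\<lambda>\<phi>. Hh Lag d v t \<phi> (p t)) (q t)"
    proof (intro exI[of _ "\<lambda>t. matrix_inv M *v (\<chi> j. Df j t)"] ballI conjI)
      fix t assume t: "t \<in> I"
      have dG: "(G has_vector_derivative (\<chi> j. Df j t)) (at t within I)"
        using Df[OF t] by (intro vec_deriv_comp) blast
      have "((\<lambda>s. matrix_inv M *v G s) has_derivative (\<lambda>h. matrix_inv M *v (h *\<^sub>R (\<chi> j. Df j t)))) (at t within I)"
        using dG unfolding has_vector_derivative_def
        by (rule bounded_linear.has_derivative[OF matrix_vector_mul_bounded_linear])
      then have "((\<lambda>s. matrix_inv M *v G s) has_vector_derivative (matrix_inv M *v (\<chi> j. Df j t))) (at t within I)"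
        unfolding has_vector_derivative_def by (simp add: matrix_vector_mult_scaleR)
      then show "(p has_vector_derivative matrix_inv M *v (\<chi> j. Df j t)) (at t within I)"
        by (rule has_vector_derivative_transform[OF t pt, rotated])
    next
      fix t assume t: "t \<in> I"
      show "transpose (massM v) *v q' t = grad_coord (\<lambda>\<pi>. Hh Lag d v t (q t) \<pi>) (p t)"
        using gp qq[OF t] unfolding M_def by simp
    next
      fix t assume t: "t \<in> I"
      have "massM v *v (matrix_inv M *v (\<chi> j. Df j t)) = (\<chi> j. E2 t j)"
        using minv_v(1)[OF invM] Df[OF t] unfolding M_def by simp
      then show "massM v *v (matrix_inv M *v (\<chi> j. Df j t)) = - grad_coord (\<lambda>\<phi>. Hh Lag d v t \<phi> (p t)) (q t)"
        using gq qq[OF t] unfolding E2_def by (simp add: vec_eq_iff)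
    qed
  qed
qed

end
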